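(* LFI3 is a sublogic of LFI1: for every set of formulas $\Gamma$ and formula $\alpha$, if $\Gamma\vDash_{LFI3}\alpha$ then $\Gamma\vDash_{LFI1}\alpha$.
   Context: Formulas are built from a countable set of propositional variables using unary $\neg,\circ$ and binary $\land,\lor,\to$. On $\{0,1\}$ use Boolean $\land,\lor,\to,\sim$. Let $\mathbb{B}=\{x\in\{0,1\}^3: x_1\lor x_2=1,\ x_3\lor\sim(x_1\land x_2)=1\}=\{T,t,b,f,F\}$ with $T=(1,0,0)$, $t=(1,0,1)$, $b=(1,1,1)$, $f=(0,1,1)$, $F=(0,1,0)$. The LFI3 algebra on $\mathbb{B}$ has operations: $a\dot\land b=(a_1\land b_1,\ a_2\lor b_2,\ (\sim a_2\land b_3)\lor(a_3\land\sim b_2)\lor(a_3\land b_3))$; $a\dot\lor b=(a_1\lor b_1,\ a_2\land b_2,\ (\sim a_1\land b_3)\lor(a_3\land\sim b_1)\lor(a_3\land b_3))$; $a\dot\to b=(a_1\to b_1,\ b_2\land(\sim a_2\lor a_3),\ (\sim a_2\land b_3)\lor(\sim a_2\land a_3\land\sim b_1)\lor(a_3\land b_3)\lor(\sim a_1\land a_3\land\sim b_1))$; $\dot\neg a=(a_2,a_1,a_3)$; $\dot\circ a=(\sim(a_1\land a_2),a_3,a_3\land\sim(a_1\land a_2))$. Designated set $D=\{T,t,b\}$. $\vDash_{LFI3}$ is the consequence relation of this matrix (valuations are homomorphisms; $\Gamma\vDash\alpha$ iff every valuation designating all of $\Gamma$ designates $\alpha$). LFI1 is the three-valued matrix logic on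 $\{1,\frac12,0\}$ with designated set $\{1,\frac12\}$, $\land=\min$, $\lor=\max$ (order $0<\frac12<1$), $a\to c=1$ if $a=0$ and $a\to c=c$ otherwise, $\neg1=0$, $\neg\frac12=\frac12$, $\neg0=1$, $\circ1=\circ0=1$, $\circ\frac12=0$; $\vDash_{LFI1}$ is its matrix consequence relation. *)

theory Defs
  imports Main
begin

datatype fm = Var nat | Neg fm | Circ fm | Conj fm fm | Disj fm fm | Imp fm fm

type_synonym v3 = "bool \<times> bool \<times> bool"

definition BB :: "v3 set" where
  "BB = {(x1, x2, x3). (x1 \<or> x2) \<and> (x3 \<or> \<not> (x1 \<and> x2))}"

definition cT :: v3 where "cT = (True, False, False)"
definition ct :: v3 where "ct = (True, False, True)"
definition cb :: v3 where "cb = (True, True, True)"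
definition cf :: v3 where "cf = (False, True, True)"
definition cF :: v3 where "cF = (False, True, False)"

definition and3 :: "v3 \<Rightarrow> v3 \<Rightarrow> v3" where
  "and3 a b = (case a of (a1, a2, a3) \<Rightarrow> case b of (b1, b2, b3) \<Rightarrow>
     (a1 \<and> b1, a2 \<or> b2, (\<not> a2 \<and> b3) \<or> (a3 \<and> \<not> b2) \<or> (a3 \<and> b3)))"

definition or3 :: "v3 \<Rightarrow> v3 \<Rightarrow> v3" where
  "or3 a b = (case a of (a1, a2, a3) \<Rightarrow> case b of (b1, b2, b3) \<Rightarrow>
     (a1 \<or> b1, a2 \<and> b2, (\<not> a1 \<and> b3) \<or> (a3 \<and> \<not> b1) \<or> (a3 \<and> b3)))"

definition imp3 :: "v3 \<Rightarrow> v3 \<Rightarrow> v3" where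
  "imp3 a b = (case a of (a1, a2, a3) \<Rightarrow> case b of (b1, b2, b3) \<Rightarrow>
     (a1 \<longrightarrow> b1, b2 \<and> (\<not> a2 \<or> a3),
      (\<not> a2 \<and> b3) \<or> (\<not> a2 \<and> a3 \<and> \<not> b1) \<or> (a3 \<and> b3) \<or> (\<not> a1 \<and> a3 \<and> \<not> b1)))"

definition neg3 :: "v3 \<Rightarrow> v3" where
  "neg3 a = (case a of (a1, a2, a3) \<Rightarrow> (a2, a1, a3))"

definition circ3 :: "v3 \<Rightarrow> v3" where
  "circ3 a = (case a of (a1, a2, a3) \<Rightarrow> (\<not> (a1 \<and> a2), a3, a3 \<and> \<not> (a1 \<and> a2)))"

definition D3 :: "v3 set" where "D3 = {cT, ct, cb}"

fun eval3 :: "(nat \<Rightarrow> v3) \<Rightarrow> fm \<Rightarrow> v3" where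
  "eval3 v (Var n) = v n"
| "eval3 v (Neg a) = neg3 (eval3 v a)"
| "eval3 v (Circ a) = circ3 (eval3 v a)"
| "eval3 v (Conj a b) = and3 (eval3 v a) (eval3 v b)"
| "eval3 v (Disj a b) = or3 (eval3 v a) (eval3 v b)"
| "eval3 v (Imp a b) = imp3 (eval3 v a) (eval3 v b)"

text \<open>Valuations into the algebra on BB are exactly the homomorphic extensions
  of assignments of the variables into BB.\<close>
definition cons_LFI3 :: "fm set \<Rightarrow> fm \<Rightarrow> bool" where
  "cons_LFI3 \<Gamma> \<alpha> \<longleftrightarrow>
     (\<forall>v. (\<forall>n. v n \<in> BB) \<longrightarrow> (\<forall>\<gamma>\<in>\<Gamma>. eval3 v \<gamma> \<in> D3) \<longrightarrow> eval3 v \<alpha> \<in> D3)"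

datatype t3 = One | Half | Zero

fun rank :: "t3 \<Rightarrow> nat" where
  "rank Zero = 0" | "rank Half = 1" | "rank One = 2"

definition min1 :: "t3 \<Rightarrow> t3 \<Rightarrow> t3" where
  "min1 a b = (if rank a \<le> rank b then a else b)"
definition max1 :: "t3 \<Rightarrow> t3 \<Rightarrow> t3" where
  "max1 a b = (if rank a \<le> rank b then b else a)"
definition imp1 :: "t3 \<Rightarrow> t3 \<Rightarrow> t3" where
  "imp1 a c = (if a = Zero then One else c)"
fun neg1 :: "t3 \<Rightarrow> t3" where
  "neg1 One = Zero" | "neg1 Half = Half" | "neg1 Zero = One"
fun circ1 :: "t3 \<Rightarrow> t3" where
  "circ1 One = One" | "circ1 Half = Zero" | "circ1 Zero = One"

definition D1 :: "t3 set" where "D1 = {One, Half}"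

fun eval1 :: "(nat \<Rightarrow> t3) \<Rightarrow> fm \<Rightarrow> t3" where
  "eval1 v (Var n) = v n"
| "eval1 v (Neg a) = neg1 (eval1 v a)"
| "eval1 v (Circ a) = circ1 (eval1 v a)"
| "eval1 v (Conj a b) = min1 (eval1 v a) (eval1 v b)"
| "eval1 v (Disj a b) = max1 (eval1 v a) (eval1 v b)"
| "eval1 v (Imp a b) = imp1 (eval1 v a) (eval1 v b)"

definition cons_LFI1 :: "fm set \<Rightarrow> fm \<Rightarrow> bool" where
  "cons_LFI1 \<Gamma> \<alpha> \<longleftrightarrow>
     (\<forall>v. (\<forall>\<gamma>\<in>\<Gamma>. eval1 v \<gamma> \<in> D1) \<longrightarrow> eval1 v \<alpha> \<in> D1)"

end

theory Submission
  imports Defs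
begin

fun emb :: "t3 \<Rightarrow> v3" where
  "emb One = cT" | "emb Half = cb" | "emb Zero = cF"

lemma emb_BB: "emb x \<in> BB"
  by (cases x) (auto simp: BB_def cT_def cb_def cF_def)

lemma emb_D: "(emb x \<in> D3) = (x \<in> D1)"
  by (cases x) (auto simp: D3_def D1_def cT_def ct_def cb_def cF_def)

lemma emb_hom: "eval3 (emb \<circ> v) a = emb (eval1 v a)"
proof (induction a)
  case (Var n) then show ?case by simp
next
  case (Neg a) then show ?case
    by (cases "eval1 v a") (auto simp: neg3_def cT_def cb_def cF_def)
next
  case (Circ a) then show ?case
    by (cases "eval1 v a") (auto simp: circ3_def cT_def cb_def cF_def)
next
  case (Conj a b) then show ?case
    by (cases "eval1 v a"; cases "eval1 v b") (auto simp: and3_def min1_def cT_def cb_def cF_def)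
next
  case (Disj a b) then show ?case
    by (cases "eval1 v a"; cases "eval1 v b") (auto simp: or3_def max1_def cT_def cb_def cF_def)
next
  case (Imp a b) then show ?case
    by (cases "eval1 v a"; cases "eval1 v b") (auto simp: imp3_def imp1_def cT_def cb_def cF_def)
qed

theorem theorem13:
  fixes \<Gamma> :: "fm set" and \<alpha> :: fm
  assumes "cons_LFI3 \<Gamma> \<alpha>"
  shows "cons_LFI1 \<Gamma> \<alpha>"
  unfolding cons_LFI1_def
proof (intro allI impI)
  fix v assume h: "\<forall>\<gamma>\<in>\<Gamma>. eval1 v \<gamma> \<in> D1"
  have "\<forall>n. (emb \<circ> v) n \<in> BB" by (simp add: emb_BB)
  moreover have "\<forall>\<gamma>\<in>\<Gamma>. eval3 (emb \<circ> v) \<gamma> \<in> D3" using h by (simp add: emb_hom emb_D)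
  ultimately have "eval3 (emb \<circ> v) \<alpha> \<in> D3" using assms unfolding cons_LFI3_def by blast
  then show "eval1 v \<alpha> \<in> D1" by (simp add: emb_hom emb_D)
qed

end
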